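(* Let \(m\) be a positive integer that is not a perfect square, and let \(a,b,c\) be positive integers with \(\gcd(a,b^2-c^2m)=1\). Then \[Frob(a,\,b+c\sqrt m)=(a-1)(b+c\sqrt m-1)(1+\sqrt m)+\mathbb N[\sqrt m].\]
   Context: \(\mathbb N\) denotes the set of non-negative integers. \(\mathbb Z[\sqrt m]=\{u+v\sqrt m\mid u,v\in\mathbb Z\}\) and \(\mathbb N[\sqrt m]=\{u+v\sqrt m\mid u,v\in\mathbb N\}\). For \(\alpha_1,\alpha_2\in\mathbb Z[\sqrt m]\), \(SG(\alpha_1,\alpha_2)=\{\lambda_1\alpha_1+\lambda_2\alpha_2\mid \lambda_1,\lambda_2\in\mathbb N[\sqrt m]\}\) and \(Frob(\alpha_1,\alpha_2)=\{w\in\mathbb Z[\sqrt m]\mid w+\mathbb N[\sqrt m]\subseteq SG(\alpha_1,\alpha_2)\}\). *)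

theory Defs
  imports Complex_Main
begin

definition Zsqrt :: "int \<Rightarrow> real set" where
  "Zsqrt m = {real_of_int u + real_of_int v * sqrt (real_of_int m) | u v. True}"

definition Nsqrt :: "int \<Rightarrow> real set" where
  "Nsqrt m = {real u + real v * sqrt (real_of_int m) | u v :: nat. True}"

definition SG :: "int \<Rightarrow> real \<Rightarrow> real \<Rightarrow> real set" where
  "SG m \<alpha>1 \<alpha>2 = {l1 * \<alpha>1 + l2 * \<alpha>2 | l1 l2. l1 \<in> Nsqrt m \<and> l2 \<in> Nsqrt m}"

definition Frob :: "int \<Rightarrow> real \<Rightarrow> real \<Rightarrow> real set" where
  "Frob m \<alpha>1 \<alpha>2 = {w \<in> Zsqrt m. (\<lambda>x. w + x) ` Nsqrt m \<subseteq> SG m \<alpha>1 \<alpha>2}"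

end

theory Submission
  imports Defs "HOL-Computational_Algebra.Nth_Powers"
begin

definition inSG :: "int \<Rightarrow> int \<Rightarrow> int \<Rightarrow> int \<Rightarrow> int \<Rightarrow> int \<Rightarrow> bool" where
  "inSG a b c m U V \<longleftrightarrow> (\<exists>x y p q. x \<ge> 0 \<and> y \<ge> 0 \<and> p \<ge> 0 \<and> q \<ge> 0 \<and>
     U = a*x + p*b + q*c*m \<and> V = a*y + p*c + q*b)"

lemma sqrt_indep:
  fixes m u v u' v' :: int
  assumes "m > 0" "\<not> (\<exists>k::int. m = k ^ 2)"
    and eq: "real_of_int u + real_of_int v * sqrt (real_of_int m) = real_of_int u' + real_of_int v' * sqrt (real_of_int m)"
  shows "u = u' \<and> v = v'"
proof (cases "v = v'")
  case True then show ?thesis using eq by simp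
next
  case False
  define d where "d = v - v'"
  define r where "r = u' - u"
  have dr: "real_of_int d * sqrt (real_of_int m) = real_of_int r"
    using eq unfolding d_def r_def by (simp add: algebra_simps)
  have "(real_of_int d * sqrt (real_of_int m))^2 = (real_of_int r)^2" using dr by simp
  hence "real_of_int (m * d^2) = real_of_int (r^2)"
    using assms(1) by (simp add: power_mult_distrib mult.commute)
  hence md: "m * d^2 = r^2" by linarith
  have d0: "d^2 \<noteq> 0" using False d_def by simp
  have "is_nth_power 2 (m * d^2)" using md by auto
  hence "is_nth_power 2 m" using is_nth_power_mult_cancel_right[OF _ d0] by auto
  then obtain k where "m = k^2" by (elim is_nth_powerE)
  with assms(2) show ?thesis by blast
qed

lemma ring_id:
  fixes s X Y A P Q B C M :: real
  assumes "s * s = M"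
  shows "(X + Y*s) * A + (P + Q*s) * (B + C*s) = (A*X + P*B + Q*C*M) + (A*Y + P*C + Q*B) * s"
  by (simp add: assms[symmetric] algebra_simps)

lemma gt_neg:
  fixes a k :: int
  assumes "a > 0" "a * k > -a"
  shows "k \<ge> 0"
proof (rule ccontr)
  assume "\<not> k \<ge> 0"
  hence "k \<le> -1" by simp
  hence "a * k \<le> a * (-1)" using assms(1) by (intro mult_left_mono) auto
  thus False using assms(2) by simp
qed

lemma inSG_suff:
  fixes a b c m U V :: int
  assumes "a > 0" "b > 0" "c > 0" "m > 0" "gcd a (b^2 - c^2*m) = 1"
    and U: "U \<ge> (a-1)*(b-1+c*m)" and V: "V \<ge> (a-1)*(b-1+c)"
  shows "inSG a b c m U V"
proof -
  define D where "D = b^2 - c^2*m"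
  obtain e f where ef: "e * D + f * a = 1"
    using bezout_int[of D a] assms(5) unfolding D_def by (metis gcd.commute)
  define X1 where "X1 = e*(b*U - c*m*V)"
  define X2 where "X2 = e*(b*V - c*U)"
  define p where "p = X1 mod a"
  define q where "q = X2 mod a"
  have p0: "0 \<le> p" "p \<le> a - 1" using assms(1) unfolding p_def by auto
  have q0: "0 \<le> q" "q \<le> a - 1" using assms(1) unfolding q_def by auto
  have d1: "a dvd (p - X1)" unfolding p_def using mod_eq_dvd_iff[of "X1 mod a" a X1] by simp
  have d2: "a dvd (q - X2)" unfolding q_def using mod_eq_dvd_iff[of "X2 mod a" a X2] by simp
  have d3: "a dvd (e*D - 1)" using ef by (metis add_diff_cancel_left' diff_eq_eq dvd_minus_iff dvd_triv_right minus_diff_eq)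
  have k1: "p*b + q*c*m - U = b*(p-X1) + c*m*(q - X2) + (e*D - 1)*U"
    unfolding X1_def X2_def D_def by (simp add: algebra_simps power2_eq_square)
  have k2: "p*c + q*b - V = c*(p-X1) + b*(q - X2) + (e*D - 1)*V"
    unfolding X1_def X2_def D_def by (simp add: algebra_simps power2_eq_square)
  have "a dvd (p*b + q*c*m - U)" unfolding k1 using d1 d2 d3 by auto
  then obtain k where k: "U - (p*b + q*c*m) = a * k" by (metis dvd_def dvd_minus_iff minus_diff_eq)
  have "p*b \<le> (a-1)*b" using p0 assms(2) by (simp add: mult_right_mono)
  moreover have "q*(c*m) \<le> (a-1)*(c*m)" using q0 assms(3,4) by (simp add: mult_right_mono)
  ultimately have "a * k > -a" using k U by (simp add: algebra_simps)
  hence kk: "k \<ge> 0" by (rule gt_neg[OF assms(1)])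
  have "a dvd (p*c + q*b - V)" unfolding k2 using d1 d2 d3 by auto
  then obtain k' where k': "V - (p*c + q*b) = a * k'" by (metis dvd_def dvd_minus_iff minus_diff_eq)
  have "p*c \<le> (a-1)*c" using p0 assms(3) by (simp add: mult_right_mono)
  moreover have "q*b \<le> (a-1)*b" using q0 assms(2) by (simp add: mult_right_mono)
  ultimately have "a * k' > -a" using k' V by (simp add: algebra_simps)
  hence kk': "k' \<ge> 0" by (rule gt_neg[OF assms(1)])
  show ?thesis unfolding inSG_def
    apply (rule exI[of _ k], rule exI[of _ k'], rule exI[of _ p], rule exI[of _ q])
    using kk kk' p0 q0 k k' by (simp add: algebra_simps)
qed


lemma inSG_nec:
  fixes a b c m U V :: int
  assumes "a > 0" "b > 0" "c > 0" "m > 0" "gcd a (b^2 - c^2*m) = 1"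
    and S: "inSG a b c m U V"
    and dU: "a dvd U - (a-1)*(b+c*m)" and dV: "a dvd V - (a-1)*(b+c)"
  shows "U \<ge> (a-1)*(b+c*m) \<and> V \<ge> (a-1)*(b+c)"
proof -
  define D where "D = b^2 - c^2*m"
  have cop: "coprime a D" using assms(5) unfolding D_def coprime_iff_gcd_eq_1 .
  obtain x y p q where xy: "x \<ge> 0" "y \<ge> 0" "p \<ge> 0" "q \<ge> 0"
     and U: "U = a*x + p*b + q*c*m" and V: "V = a*y + p*c + q*b"
    using S unfolding inSG_def by blast
  define dp where "dp = p - (a-1)"
  define dq where "dq = q - (a-1)"
  define E1 where "E1 = dp*b + dq*c*m"
  define E2 where "E2 = dp*c + dq*b"
  have "E1 = (U - (a-1)*(b+c*m)) - a*x" unfolding E1_def dp_def dq_def U by (simp add: algebra_simps)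
  hence e1: "a dvd E1" using dU by simp
  have "E2 = (V - (a-1)*(b+c)) - a*y" unfolding E2_def dp_def dq_def V by (simp add: algebra_simps)
  hence e2: "a dvd E2" using dV by simp
  have "dp * D = b*E1 - c*m*E2" unfolding E1_def E2_def D_def by (simp add: algebra_simps power2_eq_square)
  hence "a dvd dp * D" using e1 e2 by simp
  hence adp: "a dvd dp" using cop by (simp add: coprime_dvd_mult_left_iff)
  have "dq * D = b*E2 - c*E1" unfolding E1_def E2_def D_def by (simp add: algebra_simps power2_eq_square)
  hence "a dvd dq * D" using e1 e2 by simp
  hence adq: "a dvd dq" using cop by (simp add: coprime_dvd_mult_left_iff)
  obtain k where k: "dp = a*k" using adp by (elim dvdE)
  have "a*k > -a" using k xy(3) unfolding dp_def by simp
  hence "k \<ge> 0" by (rule gt_neg[OF assms(1)])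
  hence "a*k \<ge> 0" using assms(1) by simp
  hence pa: "p \<ge> a - 1" using k unfolding dp_def by simp
  obtain k' where k': "dq = a*k'" using adq by (elim dvdE)
  have "a*k' > -a" using k' xy(4) unfolding dq_def by simp
  hence "k' \<ge> 0" by (rule gt_neg[OF assms(1)])
  hence "a*k' \<ge> 0" using assms(1) by simp
  hence qa: "q \<ge> a - 1" using k' unfolding dq_def by simp
  have "p*b \<ge> (a-1)*b" using pa assms(2) by (simp add: mult_right_mono)
  moreover have "q*(c*m) \<ge> (a-1)*(c*m)" using qa assms(3,4) by (simp add: mult_right_mono)
  moreover have "p*c \<ge> (a-1)*c" using pa assms(3) by (simp add: mult_right_mono)
  moreover have "q*b \<ge> (a-1)*b" using qa assms(2) by (simp add: mult_right_mono)
  moreover have "a*x \<ge> 0" "a*y \<ge> 0" using xy assms(1) by auto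
  ultimately show ?thesis unfolding U V by (simp add: algebra_simps)
qed

lemma inSG_nec2:
  fixes a b c m U V :: int
  assumes "a > 0" "b > 0" "c > 0" "m > 0" "gcd a (b^2 - c^2*m) = 1"
    and all: "\<And>n1 n2. n1 \<ge> 0 \<Longrightarrow> n2 \<ge> 0 \<Longrightarrow> inSG a b c m (U+n1) (V+n2)"
  shows "U \<ge> (a-1)*(b-1+c*m) \<and> V \<ge> (a-1)*(b-1+c)"
proof
  show "U \<ge> (a-1)*(b-1+c*m)"
  proof (rule ccontr)
    assume "\<not> ?thesis"
    hence h: "U \<le> (a-1)*(b+c*m) - a" by (simp add: algebra_simps)
    define U' where "U' = (a-1)*(b+c*m) - a"
    define V' where "V' = (a-1)*(b+c) + a*\<bar>V\<bar>"
    have "(a-1)*(b+c) \<ge> 0" using assms by simp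
    moreover have "a*\<bar>V\<bar> \<ge> \<bar>V\<bar>" using assms(1) by (simp add: mult_right_mono[of 1 a, simplified])
    ultimately have "V' - V \<ge> 0" unfolding V'_def by linarith
    moreover have "U' - U \<ge> 0" using h unfolding U'_def by simp
    ultimately have "inSG a b c m (U + (U'-U)) (V + (V'-V))" using all by blast
    hence "inSG a b c m U' V'" by simp
    moreover have "a dvd U' - (a-1)*(b+c*m)" unfolding U'_def by simp
    moreover have "a dvd V' - (a-1)*(b+c)" unfolding V'_def by simp
    ultimately have "U' \<ge> (a-1)*(b+c*m)" using inSG_nec[OF assms(1-5)] by blast
    thus False unfolding U'_def using assms(1) by simp
  qed
next
  show "V \<ge> (a-1)*(b-1+c)"
  proof (rule ccontr)
    assume "\<not> ?thesis"
    hence h: "V \<le> (a-1)*(b+c) - a" by (simp add: algebra_simps)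
    define V' where "V' = (a-1)*(b+c) - a"
    define U' where "U' = (a-1)*(b+c*m) + a*\<bar>U\<bar>"
    have "(a-1)*(b+c*m) \<ge> 0" using assms by simp
    moreover have "a*\<bar>U\<bar> \<ge> \<bar>U\<bar>" using assms(1) by (simp add: mult_right_mono[of 1 a, simplified])
    ultimately have "U' - U \<ge> 0" unfolding U'_def by linarith
    moreover have "V' - V \<ge> 0" using h unfolding V'_def by simp
    ultimately have "inSG a b c m (U + (U'-U)) (V + (V'-V))" using all by blast
    hence "inSG a b c m U' V'" by simp
    moreover have "a dvd U' - (a-1)*(b+c*m)" unfolding U'_def by simp
    moreover have "a dvd V' - (a-1)*(b+c)" unfolding V'_def by simp
    ultimately have "V' \<ge> (a-1)*(b+c)" using inSG_nec[OF assms(1-5)] by blast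
    thus False unfolding V'_def using assms(1) by simp
  qed
qed


lemma SG_iff:
  fixes m a b c U V :: int
  assumes "m > 0" "\<not> (\<exists>k::int. m = k ^ 2)"
  shows "real_of_int U + real_of_int V * sqrt (real_of_int m) \<in>
      SG m (real_of_int a) (real_of_int b + real_of_int c * sqrt (real_of_int m))
    \<longleftrightarrow> inSG a b c m U V"
proof -
  define s where "s = sqrt (real_of_int m)"
  have ss: "s * s = real_of_int m" unfolding s_def using assms(1) by simp
  show ?thesis unfolding s_def[symmetric]
  proof
    assume "real_of_int U + real_of_int V * s \<in> SG m (real_of_int a) (real_of_int b + real_of_int c * s)"
    then obtain l1 l2 where l: "real_of_int U + real_of_int V * s = l1 * real_of_int a + l2 * (real_of_int b + real_of_int c * s)"
      and l1: "l1 \<in> Nsqrt m" and l2: "l2 \<in> Nsqrt m" unfolding SG_def s_def by blast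
    obtain x y :: nat where x: "l1 = real x + real y * s" using l1 unfolding Nsqrt_def s_def by blast
    obtain p q :: nat where p: "l2 = real p + real q * s" using l2 unfolding Nsqrt_def s_def by blast
    have "real_of_int U + real_of_int V * s =
       real_of_int (a*int x + int p*b + int q*c*m) + real_of_int (a*int y + int p*c + int q*b) * s"
      unfolding l x p using ring_id[OF ss] by simp
    hence "U = a*int x + int p*b + int q*c*m \<and> V = a*int y + int p*c + int q*b"
      using sqrt_indep[OF assms] unfolding s_def by blast
    thus "inSG a b c m U V" unfolding inSG_def
      by (intro exI[of _ "int x"] exI[of _ "int y"] exI[of _ "int p"] exI[of _ "int q"]) simp
  next
    assume "inSG a b c m U V"
    then obtain x y p q where xy: "x \<ge> 0" "y \<ge> 0" "p \<ge> 0" "q \<ge> 0"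
     and U: "U = a*x + p*b + q*c*m" and V: "V = a*y + p*c + q*b"
      unfolding inSG_def by blast
    define l1 where "l1 = real (nat x) + real (nat y) * s"
    define l2 where "l2 = real (nat p) + real (nat q) * s"
    have "l1 \<in> Nsqrt m" "l2 \<in> Nsqrt m" unfolding l1_def l2_def Nsqrt_def s_def by blast+
    moreover have "real_of_int U + real_of_int V * s = l1 * real_of_int a + l2 * (real_of_int b + real_of_int c * s)"
      unfolding l1_def l2_def ring_id[OF ss] using xy unfolding U V by simp
    ultimately show "real_of_int U + real_of_int V * s \<in> SG m (real_of_int a) (real_of_int b + real_of_int c * s)"
      unfolding SG_def s_def by blast
  qed
qed

theorem theorem2:
  fixes m a b c :: int
  assumes "m > 0" and "\<not> (\<exists>k::int. m = k ^ 2)"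
    and "a > 0" and "b > 0" and "c > 0"
    and "gcd a (b ^ 2 - c ^ 2 * m) = 1"
  shows "Frob m (real_of_int a) (real_of_int b + real_of_int c * sqrt (real_of_int m)) =
    {(real_of_int a - 1) * (real_of_int b + real_of_int c * sqrt (real_of_int m) - 1)
       * (1 + sqrt (real_of_int m)) + x | x. x \<in> Nsqrt m}"
proof -
  define s where "s = sqrt (real_of_int m)"
  have ss: "s * s = real_of_int m" unfolding s_def using assms(1) by simp
  define u0 where "u0 = (a-1)*(b-1+c*m)"
  define v0 where "v0 = (a-1)*(b-1+c)"
  have base: "(real_of_int a - 1) * (real_of_int b + real_of_int c * s - 1) * (1 + s)
      = real_of_int u0 + real_of_int v0 * s"
    unfolding u0_def v0_def by (simp add: ss[symmetric] algebra_simps)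
  have SGi: "\<And>U V. real_of_int U + real_of_int V * s \<in> SG m (real_of_int a) (real_of_int b + real_of_int c * s)
    \<longleftrightarrow> inSG a b c m U V" using SG_iff[OF assms(1,2)] unfolding s_def .
  show ?thesis unfolding s_def[symmetric] base
  proof (rule set_eqI, rule iffI)
    fix w assume w: "w \<in> Frob m (real_of_int a) (real_of_int b + real_of_int c * s)"
    then obtain U V where UV: "w = real_of_int U + real_of_int V * s"
      unfolding Frob_def Zsqrt_def s_def by blast
    have sub: "(\<lambda>x. w + x) ` Nsqrt m \<subseteq> SG m (real_of_int a) (real_of_int b + real_of_int c * s)"
      using w unfolding Frob_def by blast
    have all: "inSG a b c m (U+n1) (V+n2)" if "n1 \<ge> 0" "n2 \<ge> 0" for n1 n2
    proof -
      have "real (nat n1) + real (nat n2) * s \<in> Nsqrt m" unfolding Nsqrt_def s_def by blast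
      hence "w + (real (nat n1) + real (nat n2) * s) \<in> SG m (real_of_int a) (real_of_int b + real_of_int c * s)"
        using sub by blast
      moreover have "w + (real (nat n1) + real (nat n2) * s) = real_of_int (U+n1) + real_of_int (V+n2) * s"
        unfolding UV using that by (simp add: algebra_simps)
      ultimately show ?thesis using SGi[of "U+n1" "V+n2"] by (simp only:)
    qed
    have "U \<ge> u0 \<and> V \<ge> v0" using inSG_nec2[OF assms(3,4,5,1,6) all] unfolding u0_def v0_def by blast
    hence "w = real_of_int u0 + real_of_int v0 * s + (real (nat (U-u0)) + real (nat (V-v0)) * s)"
      unfolding UV by (simp add: algebra_simps)
    moreover have "real (nat (U-u0)) + real (nat (V-v0)) * s \<in> Nsqrt m" unfolding Nsqrt_def s_def by blast
    ultimately show "w \<in> {real_of_int u0 + real_of_int v0 * s + x |x. x \<in> Nsqrt m}" by blast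
  next
    fix w assume "w \<in> {real_of_int u0 + real_of_int v0 * s + x |x. x \<in> Nsqrt m}"
    then obtain k1 k2 :: nat where w: "w = real_of_int u0 + real_of_int v0 * s + (real k1 + real k2 * s)"
      unfolding Nsqrt_def s_def by blast
    have wU: "w = real_of_int (u0 + int k1) + real_of_int (v0 + int k2) * s"
      unfolding w by (simp add: algebra_simps)
    have "w \<in> Zsqrt m" unfolding wU Zsqrt_def s_def by blast
    moreover have "(\<lambda>x. w + x) ` Nsqrt m \<subseteq> SG m (real_of_int a) (real_of_int b + real_of_int c * s)"
    proof
      fix z assume "z \<in> (\<lambda>x. w + x) ` Nsqrt m"
      then obtain j1 j2 :: nat where z: "z = w + (real j1 + real j2 * s)"
        unfolding Nsqrt_def s_def by blast
      have zU: "z = real_of_int (u0 + int k1 + int j1) + real_of_int (v0 + int k2 + int j2) * s"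
        unfolding z wU by (simp add: algebra_simps)
      have "inSG a b c m (u0 + int k1 + int j1) (v0 + int k2 + int j2)"
        by (rule inSG_suff[OF assms(3,4,5,1,6)]) (simp_all add: u0_def v0_def)
      thus "z \<in> SG m (real_of_int a) (real_of_int b + real_of_int c * s)" unfolding zU SGi .
    qed
    ultimately show "w \<in> Frob m (real_of_int a) (real_of_int b + real_of_int c * s)"
      unfolding Frob_def by blast
  qed
qed

end
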